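(* For every integer $n \ge 6$, $\gamma^{\rm ID}(K_n \times K_{2n-5}) = 2n-4$.
   Context: For a graph $G$ and vertex $x$, $N[x]$ denotes the closed neighborhood of $x$. A set $C \subseteq V(G)$ is an identifying code (ID code) of $G$ if $C$ is a dominating set of $G$ and $N[x]\cap C \ne N[y]\cap C$ for every pair of distinct vertices $x,y$. $\gamma^{\rm ID}(G)$ is the minimum cardinality of an ID code of $G$. The direct product $G_1\times G_2$ has vertex set $V(G_1)\times V(G_2)$, with $(u_1,u_2)$ adjacent to $(v_1,v_2)$ iff $u_1v_1\in E(G_1)$ and $u_2v_2 \in E(G_2)$. $K_n$ is the complete graph on vertex set $[n]=\{1,\dots,n\}$; thus in $K_n\times K_m$ two vertices are adjacent iff they differ in both coordinates. *)

theory Defs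
  imports Main
begin

text \<open>A (finite simple) graph is given by a vertex set V and a symmetric,
irreflexive adjacency relation E.  Closed neighbourhood N[x] within V.\<close>

definition closed_nbhd :: "'a set \<Rightarrow> ('a \<Rightarrow> 'a \<Rightarrow> bool) \<Rightarrow> 'a \<Rightarrow> 'a set" where
  "closed_nbhd V E x = {y \<in> V. y = x \<or> E x y}"

definition dominating_set :: "'a set \<Rightarrow> ('a \<Rightarrow> 'a \<Rightarrow> bool) \<Rightarrow> 'a set \<Rightarrow> bool" where
  "dominating_set V E C \<longleftrightarrow> C \<subseteq> V \<and> (\<forall>x\<in>V. closed_nbhd V E x \<inter> C \<noteq> {})"

definition id_code :: "'a set \<Rightarrow> ('a \<Rightarrow> 'a \<Rightarrow> bool) \<Rightarrow> 'a set \<Rightarrow> bool" where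
  "id_code V E C \<longleftrightarrow> dominating_set V E C \<and>
     (\<forall>x\<in>V. \<forall>y\<in>V. x \<noteq> y \<longrightarrow> closed_nbhd V E x \<inter> C \<noteq> closed_nbhd V E y \<inter> C)"

text \<open>Identifying code number: minimum cardinality of an ID code
(for finite graphs admitting an ID code).\<close>

definition gamma_ID :: "'a set \<Rightarrow> ('a \<Rightarrow> 'a \<Rightarrow> bool) \<Rightarrow> nat" where
  "gamma_ID V E = Min (card ` {C. id_code V E C})"

definition K_verts :: "nat \<Rightarrow> nat set" where
  "K_verts n = {1..n}"

definition K_adj :: "nat \<Rightarrow> nat \<Rightarrow> bool" where
  "K_adj u v \<longleftrightarrow> u \<noteq> v"

definition dprod_verts :: "'a set \<Rightarrow> 'b set \<Rightarrow> ('a \<times> 'b) set" where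
  "dprod_verts V1 V2 = V1 \<times> V2"

definition dprod_adj :: "('a \<Rightarrow> 'a \<Rightarrow> bool) \<Rightarrow> ('b \<Rightarrow> 'b \<Rightarrow> bool) \<Rightarrow> ('a \<times> 'b) \<Rightarrow> ('a \<times> 'b) \<Rightarrow> bool" where
  "dprod_adj E1 E2 u v \<longleftrightarrow> E1 (fst u) (fst v) \<and> E2 (snd u) (snd v)"

end

theory Submission
  imports Defs
begin


abbreviation "EE \<equiv> dprod_adj K_adj K_adj"

lemma adjE: "dprod_adj K_adj K_adj u v \<longleftrightarrow> fst u \<noteq> fst v \<and> snd u \<noteq> snd v"
  by (simp add: dprod_adj_def K_adj_def)

lemma NC: "C \<subseteq> R \<times> Q \<Longrightarrow> closed_nbhd (R\<times>Q) EE x \<inter> C = {c\<in>C. c = x \<or> (fst x \<noteq> fst c \<and> snd x \<noteq> snd c)}"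
  unfolding closed_nbhd_def adjE by auto

lemma coll_core:
  assumes H: "\<And>u v. (u,v)\<in>C \<Longrightarrow> (((u = a \<and> v = b) \<or> (a\<noteq>u \<and> b\<noteq>v)) \<longleftrightarrow> ((u=a' \<and> v=b') \<or> (a'\<noteq>u \<and> b'\<noteq>v)))"
    and ne: "(a,b) \<noteq> (a',b')"
  shows "(a = a' \<and> (\<forall>(u,v)\<in>C. v \<noteq> b \<and> v \<noteq> b'))
       \<or> (b = b' \<and> (\<forall>(u,v)\<in>C. u \<noteq> a \<and> u \<noteq> a'))
       \<or> (a \<noteq> a' \<and> b \<noteq> b' \<and> (\<forall>(u,v)\<in>C. (u = a \<or> u = a' \<or> v = b \<or> v = b')
              \<longrightarrow> (u = a \<or> u = a') \<and> (v = b \<or> v = b')))"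
proof (cases "a = a'")
  case True
  then have "b \<noteq> b'" using ne by simp
  have "v \<noteq> b \<and> v \<noteq> b'" if "(u,v)\<in>C" for u v
    using H[OF that] True \<open>b\<noteq>b'\<close> by blast
  then show ?thesis using True by blast
next
  case F: False
  show ?thesis
  proof (cases "b = b'")
    case True
    have "u \<noteq> a \<and> u \<noteq> a'" if "(u,v)\<in>C" for u v
      using H[OF that] True F by blast
    then show ?thesis using True by blast
  next
    case False
    have "(u = a \<or> u = a' \<or> v = b \<or> v = b') \<longrightarrow> (u = a \<or> u = a') \<and> (v = b \<or> v = b')" if "(u,v)\<in>C" for u v
      using H[OF that] F False by blast
    then show ?thesis using F False by blast
  qed
qed

lemma collision:
  assumes "C \<subseteq> R\<times>Q" "(a,b) \<noteq> (a',b')"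
    "closed_nbhd (R\<times>Q) EE (a,b) \<inter> C = closed_nbhd (R\<times>Q) EE (a',b') \<inter> C"
  shows "(a = a' \<and> (\<forall>(u,v)\<in>C. v \<noteq> b \<and> v \<noteq> b'))
       \<or> (b = b' \<and> (\<forall>(u,v)\<in>C. u \<noteq> a \<and> u \<noteq> a'))
       \<or> (a \<noteq> a' \<and> b \<noteq> b' \<and> (\<forall>(u,v)\<in>C. (u = a \<or> u = a' \<or> v = b \<or> v = b')
              \<longrightarrow> (u = a \<or> u = a') \<and> (v = b \<or> v = b')))"
proof (rule coll_core[OF _ assms(2)])
  fix u v assume uv: "(u,v) \<in> C"
  have "(u,v) \<in> closed_nbhd (R\<times>Q) EE (a,b) \<inter> C \<longleftrightarrow> (u,v) \<in> closed_nbhd (R\<times>Q) EE (a',b') \<inter> C"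
    using assms(3) by simp
  then show "((u = a \<and> v = b) \<or> (a\<noteq>u \<and> b\<noteq>v)) \<longleftrightarrow> ((u=a' \<and> v=b') \<or> (a'\<noteq>u \<and> b'\<noteq>v))"
    unfolding NC[OF assms(1)] using uv by auto
qed



lemma sum_row:
  fixes f :: "'a \<Rightarrow> nat" assumes "finite A"
  shows "2 * card A \<le> sum f A + 2 * card {x\<in>A. f x = 0} + card {x\<in>A. f x = 1}"
proof -
  have "(\<Sum>x\<in>A. 2::nat) \<le> (\<Sum>x\<in>A. f x + of_bool (f x = 0) + of_bool (f x = 0) + of_bool (f x = 1))"
    by (rule sum_mono) auto
  also have "\<dots> = sum f A + card (A \<inter> {x. f x = 0}) + card (A \<inter> {x. f x = 0}) + card (A \<inter> {x. f x = 1})"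
    using assms by (simp only: sum.distrib sum_of_bool_eq of_nat_id)
  also have "A \<inter> {x. f x = 0} = {x\<in>A. f x = 0}" by blast
  also have "A \<inter> {x. f x = 1} = {x\<in>A. f x = 1}" by blast
  finally show ?thesis by simp
qed

lemma sum_col:
  fixes f :: "'a \<Rightarrow> nat" assumes "finite A"
  shows "card A \<le> sum f A + card {x\<in>A. f x = 0}"
proof -
  have "(\<Sum>x\<in>A. 1::nat) \<le> (\<Sum>x\<in>A. f x + of_bool (f x = 0))"
    by (rule sum_mono) auto
  also have "\<dots> = sum f A + card (A \<inter> {x. f x = 0})"
    using assms by (simp only: sum.distrib sum_of_bool_eq of_nat_id)
  also have "A \<inter> {x. f x = 0} = {x\<in>A. f x = 0}" by blast
  finally show ?thesis by simp
qed

lemma card_rows: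
  assumes "finite R" "finite Q" "C \<subseteq> R\<times>Q"
  shows "card C = (\<Sum>r\<in>R. card {j\<in>Q. (r,j)\<in>C})"
proof -
  have "C = (SIGMA r:R. {j\<in>Q. (r,j)\<in>C})" using assms by auto
  then have "card C = card (SIGMA r:R. {j\<in>Q. (r,j)\<in>C})" by simp
  also have "\<dots> = (\<Sum>r\<in>R. card {j\<in>Q. (r,j)\<in>C})" by (rule card_SigmaI) (use assms in auto)
  finally show ?thesis .
qed

lemma card_cols:
  assumes "finite R" "finite Q" "C \<subseteq> R\<times>Q"
  shows "card C = (\<Sum>j\<in>Q. card {i\<in>R. (i,j)\<in>C})"
proof -
  have "prod.swap ` C = (SIGMA j:Q. {i\<in>R. (i,j)\<in>C})" using assms by force
  moreover have "card (prod.swap ` C) = card C" by (simp add: card_image)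
  moreover have "card (SIGMA j:Q. {i\<in>R. (i,j)\<in>C}) = (\<Sum>j\<in>Q. card {i\<in>R. (i,j)\<in>C})" by (rule card_SigmaI) (use assms in auto)
  ultimately show ?thesis by simp
qed



lemma block:
  assumes "C \<subseteq> R\<times>Q"
    "\<forall>(u,v)\<in>C. (u = r \<or> u = r' \<or> v = q \<or> v = q') \<longrightarrow> (u = r \<or> u = r') \<and> (v = q \<or> v = q')"
    "r \<noteq> r'" "q \<noteq> q'"
  shows "closed_nbhd (R\<times>Q) EE (r,q) \<inter> C = closed_nbhd (R\<times>Q) EE (r',q') \<inter> C"
  unfolding NC[OF assms(1)]
proof (rule Collect_cong)
  fix c :: "nat \<times> nat"
  obtain u v where c: "c = (u,v)" by fastforce
  show "(c \<in> C \<and> (c = (r,q) \<or> fst (r,q) \<noteq> fst c \<and> snd (r,q) \<noteq> snd c)) =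
        (c \<in> C \<and> (c = (r',q') \<or> fst (r',q') \<noteq> fst c \<and> snd (r',q') \<noteq> snd c))"
  proof (cases "(u,v) \<in> C")
    case True
    have "(u = r \<or> u = r' \<or> v = q \<or> v = q') \<longrightarrow> (u = r \<or> u = r') \<and> (v = q \<or> v = q')"
      using assms(2) True by blast
    then show ?thesis unfolding c using True assms(3,4) by auto
  qed (simp add: c)
qed

lemma samerow:
  assumes "C \<subseteq> R\<times>Q" "\<forall>(u,v)\<in>C. v \<noteq> q \<and> v \<noteq> q'"
  shows "closed_nbhd (R\<times>Q) EE (r,q) \<inter> C = closed_nbhd (R\<times>Q) EE (r,q') \<inter> C"
  unfolding NC[OF assms(1)]
proof (rule Collect_cong)
  fix c :: "nat \<times> nat"
  obtain u v where c: "c = (u,v)" by fastforce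
  show "(c \<in> C \<and> (c = (r,q) \<or> fst (r,q) \<noteq> fst c \<and> snd (r,q) \<noteq> snd c)) =
        (c \<in> C \<and> (c = (r,q') \<or> fst (r,q') \<noteq> fst c \<and> snd (r,q') \<noteq> snd c))"
  proof (cases "(u,v) \<in> C")
    case True
    have "v \<noteq> q \<and> v \<noteq> q'" using assms(2) True by blast
    then show ?thesis unfolding c using True by auto
  qed (simp add: c)
qed

lemma samecol:
  assumes "C \<subseteq> R\<times>Q" "\<forall>(u,v)\<in>C. u \<noteq> r \<and> u \<noteq> r'"
  shows "closed_nbhd (R\<times>Q) EE (r,q) \<inter> C = closed_nbhd (R\<times>Q) EE (r',q) \<inter> C"
  unfolding NC[OF assms(1)]
proof (rule Collect_cong)
  fix c :: "nat \<times> nat"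
  obtain u v where c: "c = (u,v)" by fastforce
  show "(c \<in> C \<and> (c = (r,q) \<or> fst (r,q) \<noteq> fst c \<and> snd (r,q) \<noteq> snd c)) =
        (c \<in> C \<and> (c = (r',q) \<or> fst (r',q) \<noteq> fst c \<and> snd (r',q) \<noteq> snd c))"
  proof (cases "(u,v) \<in> C")
    case True
    have "u \<noteq> r \<and> u \<noteq> r'" using assms(2) True by blast
    then show ?thesis unfolding c using True by auto
  qed (simp add: c)
qed



lemma lower:
  assumes fR: "finite R" and fQ: "finite Q" and Rne: "R \<noteq> {}" and Qne: "Q \<noteq> {}"
    and idc: "id_code (R\<times>Q) EE C"
    and c1: "card C \<le> card Q" and c2: "card C + 5 \<le> 2 * card R"
  shows False
proof -
  define V where "V = R \<times> Q"
  have CV: "C \<subseteq> R\<times>Q" using idc unfolding id_code_def dominating_set_def by blast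
  have IDs: "\<And>x y. x \<in> R\<times>Q \<Longrightarrow> y \<in> R\<times>Q \<Longrightarrow> x \<noteq> y \<Longrightarrow>
      closed_nbhd (R\<times>Q) EE x \<inter> C \<noteq> closed_nbhd (R\<times>Q) EE y \<inter> C"
    using idc unfolding id_code_def by blast
  define rs where "rs r = {j\<in>Q. (r,j)\<in>C}" for r
  define cs where "cs j = {i\<in>R. (i,j)\<in>C}" for j
  define Z where "Z = {j\<in>Q. card (cs j) = 0}"
  define S0 where "S0 = {r\<in>R. card (rs r) = 0}"
  define S1 where "S1 = {r\<in>R. card (rs r) = 1}"
  have fcs: "finite (cs j)" for j using fR unfolding cs_def by simp
  have frs: "finite (rs r)" for r using fQ unfolding rs_def by simp
  have inC: "u \<in> R \<and> v \<in> Q" if "(u,v) \<in> C" for u v using CV that by blast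
  have rowsum: "card C = (\<Sum>r\<in>R. card (rs r))" unfolding rs_def by (rule card_rows[OF fR fQ CV])
  have colsum: "card C = (\<Sum>j\<in>Q. card (cs j))" unfolding cs_def by (rule card_cols[OF fR fQ CV])
  have Z1: "card Z \<le> 1"
  proof (rule ccontr)
    assume "\<not> card Z \<le> 1"
    then obtain q q' where qq: "q \<in> Z" "q' \<in> Z" "q \<noteq> q'"
      using card_le_Suc0_iff_eq[of Z] fQ unfolding Z_def by auto
    have "cs q = {}" "cs q' = {}" using qq fcs unfolding Z_def by auto
    then have "\<forall>(u,v)\<in>C. v \<noteq> q \<and> v \<noteq> q'" unfolding cs_def using inC by blast
    from samerow[OF CV this] obtain r where "r \<in> R" using Rne by blast
    have "q \<in> Q" "q' \<in> Q" using qq unfolding Z_def by auto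
    then show False using IDs[of "(r,q)" "(r,q')"] samerow[OF CV \<open>\<forall>(u,v)\<in>C. v \<noteq> q \<and> v \<noteq> q'\<close>] \<open>r\<in>R\<close> qq(3)
      by auto
  qed
  have S01: "card S0 \<le> 1"
  proof (rule ccontr)
    assume "\<not> card S0 \<le> 1"
    then obtain r r' where rr: "r \<in> S0" "r' \<in> S0" "r \<noteq> r'"
      using card_le_Suc0_iff_eq[of S0] fR unfolding S0_def by auto
    have "rs r = {}" "rs r' = {}" using rr frs unfolding S0_def by auto
    then have H: "\<forall>(u,v)\<in>C. u \<noteq> r \<and> u \<noteq> r'" unfolding rs_def using inC by blast
    obtain q where "q \<in> Q" using Qne by blast
    have "r \<in> R" "r' \<in> R" using rr unfolding S0_def by auto
    then show False using IDs[of "(r,q)" "(r',q)"] samecol[OF CV H] \<open>q\<in>Q\<close> rr(3)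
      by auto
  qed
  have "2 * card R \<le> card C + 2 * card S0 + card S1"
    using sum_row[OF fR, of "\<lambda>r. card (rs r)"] unfolding rowsum S0_def S1_def by simp
  then have S13: "3 \<le> card S1" using S01 c2 by linarith
  have F1: "card (cs q) \<le> 1 + card Z" if "q \<in> Q" for q
  proof -
    have "card (Q - {q}) \<le> (\<Sum>j\<in>Q-{q}. card (cs j)) + card {j\<in>Q-{q}. card (cs j) = 0}"
      by (rule sum_col) (use fQ in simp)
    moreover have "card {j\<in>Q-{q}. card (cs j) = 0} \<le> card Z"
      by (rule card_mono) (use fQ in \<open>auto simp: Z_def\<close>)
    moreover have "card C = card (cs q) + (\<Sum>j\<in>Q-{q}. card (cs j))"
      unfolding colsum using sum.remove[OF fQ that] by simp
    moreover have "card (Q - {q}) = card Q - 1" using that fQ by simp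
    moreover have "card Q \<ge> 1" using that fQ by (metis One_nat_def Suc_leI card_gt_0_iff empty_iff)
    ultimately show ?thesis using c1 by linarith
  qed
  have F2: False if "q \<in> Q" "q' \<in> Q" "q \<noteq> q'" "card (cs q) \<ge> 2" "card (cs q') \<ge> 2" for q q'
  proof -
    have "card (Q - {q,q'}) \<le> (\<Sum>j\<in>Q-{q,q'}. card (cs j)) + card {j\<in>Q-{q,q'}. card (cs j) = 0}"
      by (rule sum_col) (use fQ in simp)
    moreover have "card {j\<in>Q-{q,q'}. card (cs j) = 0} \<le> card Z"
      by (rule card_mono) (use fQ in \<open>auto simp: Z_def\<close>)
    moreover have "card C = card (cs q) + (card (cs q') + (\<Sum>j\<in>Q-{q,q'}. card (cs j)))"
    proof -
      have "card C = card (cs q) + (\<Sum>j\<in>Q-{q}. card (cs j))"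
        unfolding colsum using sum.remove[OF fQ that(1)] by simp
      moreover have "(\<Sum>j\<in>Q-{q}. card (cs j)) = card (cs q') + (\<Sum>j\<in>Q-{q}-{q'}. card (cs j))"
        using sum.remove[of "Q-{q}" q'] fQ that by simp
      moreover have "Q-{q}-{q'} = Q-{q,q'}" by blast
      ultimately show ?thesis by simp
    qed
    moreover have "card (Q - {q,q'}) = card Q - 2" using that fQ by (simp add: card_Diff_subset)
    moreover have "card Q \<ge> 2"
    proof -
      have "card {q,q'} \<le> card Q" by (rule card_mono) (use fQ that in auto)
      then show ?thesis using that(3) by simp
    qed
    ultimately show False using c1 Z1 that(4,5) by linarith
  qed
  have PP: False if abR: "a \<in> R" "b \<in> R" and abne: "a \<noteq> b" and rsa: "rs a = {q}" and rsb: "rs b = {q}" for a b q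
  proof -
    have qQ: "q \<in> Q" and ab: "(a,q) \<in> C" "(b,q) \<in> C" using rsa rsb unfolding rs_def by auto
    have sub: "{a,b} \<subseteq> cs q" using ab abR unfolding cs_def by auto
    then have "2 \<le> card (cs q)" using card_mono[OF fcs sub] abne by simp
    with F1[OF qQ] Z1 have "card Z = 1" "card (cs q) \<le> 2" by auto
    then have csq: "cs q = {a,b}" using card_seteq[OF fcs sub] abne by simp
    obtain z where "Z = {z}" using \<open>card Z = 1\<close> card_1_singletonE by blast
    then have zQ: "z \<in> Q" and csz: "cs z = {}" using fcs unfolding Z_def by auto
    have zq: "z \<noteq> q" using csz csq by auto
    have H0: "(u = a \<or> u = b \<or> v = q \<or> v = z) \<longrightarrow> (u = a \<or> u = b) \<and> (v = q \<or> v = z)" if uv: "(u,v) \<in> C" for u v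
    proof -
      have "u = a \<Longrightarrow> v = q" using uv rsa inC[OF uv] unfolding rs_def by blast
      moreover have "u = b \<Longrightarrow> v = q" using uv rsb inC[OF uv] unfolding rs_def by blast
      moreover have "v = q \<Longrightarrow> u = a \<or> u = b" using uv csq inC[OF uv] unfolding cs_def by blast
      moreover have "v \<noteq> z" using uv csz inC[OF uv] unfolding cs_def by blast
      ultimately show ?thesis by blast
    qed
    have H: "\<forall>(u,v)\<in>C. (u = a \<or> u = b \<or> v = q \<or> v = z) \<longrightarrow> (u = a \<or> u = b) \<and> (v = q \<or> v = z)"
      using H0 by blast
    show False using IDs[of "(a,q)" "(b,z)"] block[OF CV H abne zq[symmetric]] abR abne qQ zQ by auto
  qed
  have QQ: False if abR: "a \<in> R" "b \<in> R" and abne: "a \<noteq> b" and rsa: "rs a = {qa}" and rsb: "rs b = {qb}"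
     and qne: "qa \<noteq> qb" and ca: "card (cs qa) = 1" and cb: "card (cs qb) = 1" for a b qa qb
  proof -
    have qQ: "qa \<in> Q" "qb \<in> Q" and ab: "(a,qa) \<in> C" "(b,qb) \<in> C" using rsa rsb unfolding rs_def by auto
    have "a \<in> cs qa" "b \<in> cs qb" using ab abR unfolding cs_def by auto
    then have csa: "cs qa = {a}" and csb: "cs qb = {b}" using ca cb card_1_singletonE by (metis singletonD)+
    have H0: "(u = a \<or> u = b \<or> v = qa \<or> v = qb) \<longrightarrow> (u = a \<or> u = b) \<and> (v = qa \<or> v = qb)" if uv: "(u,v) \<in> C" for u v
    proof -
      have "u = a \<Longrightarrow> v = qa" using uv rsa inC[OF uv] unfolding rs_def by blast
      moreover have "u = b \<Longrightarrow> v = qb" using uv rsb inC[OF uv] unfolding rs_def by blast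
      moreover have "v = qa \<Longrightarrow> u = a" using uv csa inC[OF uv] unfolding cs_def by blast
      moreover have "v = qb \<Longrightarrow> u = b" using uv csb inC[OF uv] unfolding cs_def by blast
      ultimately show ?thesis by blast
    qed
    have H: "\<forall>(u,v)\<in>C. (u = a \<or> u = b \<or> v = qa \<or> v = qb) \<longrightarrow> (u = a \<or> u = b) \<and> (v = qa \<or> v = qb)"
      using H0 by blast
    show False using IDs[of "(a,qa)" "(b,qb)"] block[OF CV H abne qne] abR abne qQ by auto
  qed
  obtain r1 where r1: "r1 \<in> S1" using S13 by (metis card.empty empty_iff not_numeral_le_zero subsetI subset_antisym)
  have "2 \<le> card (S1 - {r1})" using S13 r1 by (simp add: card_Diff_singleton_if)
  then obtain r2 where r2: "r2 \<in> S1 - {r1}" by (metis card.empty empty_iff not_numeral_le_zero subsetI subset_antisym)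
  have "1 \<le> card (S1 - {r1} - {r2})" using \<open>2 \<le> card (S1 - {r1})\<close> r2 by (simp add: card_Diff_singleton_if)
  then obtain r3 where r3: "r3 \<in> S1 - {r1} - {r2}" by (metis card.empty empty_iff not_one_le_zero subsetI subset_antisym)
  have S1E: "\<exists>q. rs r = {q} \<and> q \<in> Q \<and> card (cs q) \<ge> 1" if rS: "r \<in> S1" for r
  proof -
    have "card (rs r) = 1" using rS unfolding S1_def by auto
    then obtain q where q: "rs r = {q}" using card_1_singletonE by blast
    then have "q \<in> Q" "(r,q) \<in> C" "r \<in> R" using rS unfolding rs_def S1_def by auto
    then have "r \<in> cs q" unfolding cs_def by auto
    then have "card (cs q) \<ge> 1" using fcs by (metis One_nat_def Suc_leI card_gt_0_iff empty_iff)
    with q \<open>q\<in>Q\<close> show ?thesis by blast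
  qed
  obtain q1 where q1: "rs r1 = {q1}" "q1 \<in> Q" "card (cs q1) \<ge> 1" using S1E r1 by blast
  obtain q2 where q2: "rs r2 = {q2}" "q2 \<in> Q" "card (cs q2) \<ge> 1" using S1E r2 by blast
  obtain q3 where q3: "rs r3 = {q3}" "q3 \<in> Q" "card (cs q3) \<ge> 1" using S1E r3 by blast
  have R123: "r1 \<in> R" "r2 \<in> R" "r3 \<in> R" "r1 \<noteq> r2" "r1 \<noteq> r3" "r2 \<noteq> r3"
    using r1 r2 r3 unfolding S1_def by auto
  have d12: "q1 \<noteq> q2" using PP[OF R123(1,2,4)] q1 q2 by blast
  have d13: "q1 \<noteq> q3" using PP[OF R123(1,3,5)] q1 q3 by blast
  have d23: "q2 \<noteq> q3" using PP[OF R123(2,3,6)] q2 q3 by blast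
  show False
  proof (cases "card (cs q1) = 1")
    case c1: True
    show False
    proof (cases "card (cs q2) = 1")
      case True
      then show False using QQ[OF R123(1,2,4) q1(1) q2(1) d12 c1] by blast
    next
      case False
      then have g2: "card (cs q2) \<ge> 2" using q2 by linarith
      show False
      proof (cases "card (cs q3) = 1")
        case True
        then show False using QQ[OF R123(1,3,5) q1(1) q3(1) d13 c1] by blast
      next
        case False
        then show False using F2[OF q2(2) q3(2) d23 g2] q3 by linarith
      qed
    qed
  next
    case False
    then have g1: "card (cs q1) \<ge> 2" using q1 by linarith
    show False
    proof (cases "card (cs q2) = 1")
      case c2: True
      show False
      proof (cases "card (cs q3) = 1")
        case True
        then show False using QQ[OF R123(2,3,6) q2(1) q3(1) d23 c2] by blast
      next
        case False
        then show False using F2[OF q1(2) q3(2) d13 g1] q3 by linarith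
      qed
    next
      case False
      then show False using F2[OF q1(2) q2(2) d12 g1] q2 by linarith
    qed
  qed
qed



definition C0 :: "nat \<Rightarrow> (nat \<times> nat) set" where
  "C0 n = {(1,1),(2,1),(3,1)} \<union> (\<lambda>j. ((j+7) div 2, j)) ` {2..2*n-6}"

lemma C0_mem: "(a,b) \<in> C0 n \<longleftrightarrow> (b = 1 \<and> (a = 1 \<or> a = 2 \<or> a = 3)) \<or> (2 \<le> b \<and> b \<le> 2*n-6 \<and> a = (b+7) div 2)"
  unfolding C0_def by auto

lemma C0_sub: "n \<ge> 6 \<Longrightarrow> C0 n \<subseteq> {1..n} \<times> {1..2*n-5}"
proof
  fix c assume n: "n \<ge> 6" and c: "c \<in> C0 n"
  obtain a b where ab: "c = (a,b)" by fastforce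
  from c have "(b = 1 \<and> (a = 1 \<or> a = 2 \<or> a = 3)) \<or> (2 \<le> b \<and> b \<le> 2*n-6 \<and> a = (b+7) div 2)"
    unfolding ab C0_mem .
  then show "c \<in> {1..n} \<times> {1..2*n-5}" unfolding ab using n by auto
qed

lemma C0_card: "n \<ge> 6 \<Longrightarrow> card (C0 n) = 2*n-4"
proof -
  assume n: "n \<ge> 6"
  have "card {(1::nat,1::nat),(2,1),(3,1)} = 3" by simp
  moreover have "card ((\<lambda>j. ((j+7) div 2, j)) ` {2..2*n-6}) = card {2..2*n-6}"
    by (rule card_image) (auto simp: inj_on_def)
  moreover have "{(1::nat,1::nat),(2,1),(3,1)} \<inter> (\<lambda>j. ((j+7) div 2, j)) ` {2..2*n-6} = {}" by auto
  ultimately have "card (C0 n) = 3 + card {2..2*n-6}"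
    unfolding C0_def by (simp add: card_Un_disjoint)
  then show ?thesis using n by simp
qed

lemma C0_row: "n \<ge> 6 \<Longrightarrow> 1 \<le> a \<Longrightarrow> a \<le> n \<Longrightarrow> \<exists>b. (a,b) \<in> C0 n"
proof -
  assume n: "n \<ge> 6" "1 \<le> a" "a \<le> n"
  show ?thesis
  proof (cases "a \<le> 3")
    case True
    then have "(a,1) \<in> C0 n" unfolding C0_mem using n by auto
    then show ?thesis by blast
  next
    case False
    then have "(a,2*a-6) \<in> C0 n" unfolding C0_mem using n by auto
    then show ?thesis by blast
  qed
qed

lemma C0_col: "n \<ge> 6 \<Longrightarrow> 1 \<le> b \<Longrightarrow> b \<le> 2*n-6 \<Longrightarrow> \<exists>a. (a,b) \<in> C0 n"
proof -
  assume n: "n \<ge> 6" "1 \<le> b" "b \<le> 2*n-6"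
  show ?thesis
  proof (cases "b = 1")
    case True
    then have "(1,b) \<in> C0 n" unfolding C0_mem by auto
    then show ?thesis by blast
  next
    case False
    then have "((b+7) div 2,b) \<in> C0 n" unfolding C0_mem using n by auto
    then show ?thesis by blast
  qed
qed

lemma C0_noblock:
  assumes n: "n \<ge> 6" and rR: "1 \<le> r" "r \<le> n" "1 \<le> r'" "r' \<le> n" and ne: "r \<noteq> r'" "q \<noteq> q'"
    and H: "\<forall>(u,v)\<in>C0 n. (u = r \<or> u = r' \<or> v = q \<or> v = q') \<longrightarrow> (u = r \<or> u = r') \<and> (v = q \<or> v = q')"
  shows False
proof -
  have H': "\<And>u v. (u,v) \<in> C0 n \<Longrightarrow> (u = r \<or> u = r' \<or> v = q \<or> v = q') \<Longrightarrow> (u = r \<or> u = r') \<and> (v = q \<or> v = q')"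
    using H by blast
  have e1: "(1,1) \<in> C0 n" "(2,1) \<in> C0 n" "(3,1) \<in> C0 n" unfolding C0_mem by auto
  have small: False if "x \<le> 3" "x = r \<or> x = r'" "1 \<le> x" for x
  proof -
    have "(x,1) \<in> C0 n" unfolding C0_mem using that by auto
    then have "1 = q \<or> 1 = q'" using H' that(2) by blast
    then have "(1 = r \<or> 1 = r') \<and> (2 = r \<or> 2 = r') \<and> (3 = r \<or> 3 = r')"
      using H'[OF e1(1)] H'[OF e1(2)] H'[OF e1(3)] by blast
    then show False by auto
  qed
  have "\<not> r \<le> 3" using small[of r] rR by blast
  then have r4: "r \<ge> 4" by linarith
  have "\<not> r' \<le> 3" using small[of r'] rR by blast
  then have r'4: "r' \<ge> 4" by linarith
  have a: "(r, 2*r-6) \<in> C0 n" "(r', 2*r'-6) \<in> C0 n" unfolding C0_mem using r4 r'4 rR by auto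
  have A: "2*r-6 = q \<or> 2*r-6 = q'" using H'[OF a(1)] by blast
  have B: "2*r'-6 = q \<or> 2*r'-6 = q'" using H'[OF a(2)] by blast
  have AB: "2*r-6 \<noteq> 2*r'-6" using r4 r'4 ne(1) by linarith
  have key: "w = 2*r-6 \<or> w = 2*r'-6" if "w = q \<or> w = q'" for w
    using A B AB ne(2) that by auto
  show False
  proof (cases "r \<ge> 5")
    case True
    have "(r, 2*r-7) \<in> C0 n" unfolding C0_mem using True rR by auto
    then have "2*r-7 = q \<or> 2*r-7 = q'" using H' by blast
    then have "2*r-7 = 2*r-6 \<or> 2*r-7 = 2*r'-6" by (rule key)
    moreover have "(2::nat)*r-7 \<noteq> 2*r'-6" using True r'4 by presburger
    ultimately show False using True by linarith
  next
    case False
    then have r'5: "r' \<ge> 5" using r4 r'4 ne by linarith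
    then have "(r', 2*r'-7) \<in> C0 n" unfolding C0_mem using rR by auto
    then have "2*r'-7 = q \<or> 2*r'-7 = q'" using H' by blast
    then have "2*r'-7 = 2*r-6 \<or> 2*r'-7 = 2*r'-6" by (rule key)
    moreover have "(2::nat)*r'-7 \<noteq> 2*r-6" using r'5 r4 by presburger
    ultimately show False using r'5 by linarith
  qed
qed

lemma C0_id:
  assumes n: "n \<ge> 6"
  shows "id_code ({1..n} \<times> {1..2*n-5}) EE (C0 n)"
proof -
  let ?R = "{1..n}" and ?Q = "{1..2*n-5}"
  have CV: "C0 n \<subseteq> ?R \<times> ?Q" by (rule C0_sub[OF n])
  have dom: "closed_nbhd (?R\<times>?Q) EE x \<inter> C0 n \<noteq> {}" if "x \<in> ?R\<times>?Q" for x
  proof -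
    obtain i j where x: "x = (i,j)" by fastforce
    have "\<exists>c\<in>C0 n. i \<noteq> fst c \<and> j \<noteq> snd c"
    proof (cases "j = 1")
      case True
      have e: "(5,3) \<in> C0 n" "(6,5) \<in> C0 n" unfolding C0_mem using n by auto
      show ?thesis
      proof (cases "i = 5")
        case True2: True
        show ?thesis by (rule bexI[OF _ e(2)]) (use True True2 in simp)
      next
        case False2: False
        show ?thesis by (rule bexI[OF _ e(1)]) (use True False2 in simp)
      qed
    next
      case False
      have e: "(1,1) \<in> C0 n" "(2,1) \<in> C0 n" unfolding C0_mem by auto
      show ?thesis
      proof (cases "i = 1")
        case True2: True
        show ?thesis by (rule bexI[OF _ e(2)]) (use False True2 in simp)
      next
        case False2: False
        show ?thesis by (rule bexI[OF _ e(1)]) (use False False2 in simp)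
      qed
    qed
    then obtain c where c: "c \<in> C0 n" "i \<noteq> fst c \<and> j \<noteq> snd c" by blast
    then have "c \<in> {c\<in>C0 n. c = (i,j) \<or> (fst (i,j) \<noteq> fst c \<and> snd (i,j) \<noteq> snd c)}" by simp
    then show ?thesis unfolding NC[OF CV] x by blast
  qed
  have sep: "closed_nbhd (?R\<times>?Q) EE x \<inter> C0 n \<noteq> closed_nbhd (?R\<times>?Q) EE y \<inter> C0 n"
    if xy: "x \<in> ?R\<times>?Q" "y \<in> ?R\<times>?Q" "x \<noteq> y" for x y
  proof
    assume eq: "closed_nbhd (?R\<times>?Q) EE x \<inter> C0 n = closed_nbhd (?R\<times>?Q) EE y \<inter> C0 n"
    obtain a b where x: "x = (a,b)" by fastforce
    obtain a' b' where y: "y = (a',b')" by fastforce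
    have ab: "1 \<le> a" "a \<le> n" "1 \<le> b" "b \<le> 2*n-5" "1 \<le> a'" "a' \<le> n" "1 \<le> b'" "b' \<le> 2*n-5"
      using xy unfolding x y by auto
    from collision[OF CV xy(3)[unfolded x y] eq[unfolded x y]]
    consider (r) "a = a'" "\<forall>(u,v)\<in>C0 n. v \<noteq> b \<and> v \<noteq> b'"
      | (c) "b = b'" "\<forall>(u,v)\<in>C0 n. u \<noteq> a \<and> u \<noteq> a'"
      | (bl) "a \<noteq> a'" "b \<noteq> b'" "\<forall>(u,v)\<in>C0 n. (u = a \<or> u = a' \<or> v = b \<or> v = b') \<longrightarrow> (u = a \<or> u = a') \<and> (v = b \<or> v = b')"
      by blast
    then show False
    proof cases
      case r
      then have "b \<noteq> b'" using xy(3) unfolding x y by simp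
      then have "b \<le> 2*n-6 \<or> b' \<le> 2*n-6" using ab by linarith
      then show False
      proof
        assume "b \<le> 2*n-6"
        then obtain u where "(u,b) \<in> C0 n" using C0_col[OF n ab(3)] by blast
        then show False using r(2) by blast
      next
        assume "b' \<le> 2*n-6"
        then obtain u where "(u,b') \<in> C0 n" using C0_col[OF n ab(7)] by blast
        then show False using r(2) by blast
      qed
    next
      case c
      obtain v where "(a,v) \<in> C0 n" using C0_row[OF n ab(1,2)] by blast
      then show False using c(2) by blast
    next
      case bl
      show False using C0_noblock[OF n ab(1,2,5,6) bl(1,2) bl(3)] .
    qed
  qed
  show ?thesis unfolding id_code_def dominating_set_def using CV dom sep by blast
qed

theorem theorem4:
  fixes n :: nat
  assumes "n \<ge> 6"
  shows "gamma_ID (dprod_verts (K_verts n) (K_verts (2*n-5))) (dprod_adj K_adj K_adj) = 2*n-4"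
proof -
  let ?R = "{1..n}" and ?Q = "{1..2*n-5}"
  have V: "dprod_verts (K_verts n) (K_verts (2*n-5)) = ?R \<times> ?Q"
    unfolding dprod_verts_def K_verts_def by simp
  have fin: "finite (card ` {C. id_code (?R\<times>?Q) EE C})"
  proof -
    have "{C. id_code (?R\<times>?Q) EE C} \<subseteq> Pow (?R\<times>?Q)"
      unfolding id_code_def dominating_set_def by auto
    then show ?thesis by (meson finite_Pow_iff finite_SigmaI finite_atLeastAtMost finite_imageI finite_subset)
  qed
  have lb: "2*n-4 \<le> k" if kmem: "k \<in> card ` {C. id_code (?R\<times>?Q) EE C}" for k
  proof (rule ccontr)
    assume "\<not> 2*n-4 \<le> k"
    obtain C where C: "id_code (?R\<times>?Q) EE C" "k = card C" using kmem by blast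
    have "card C \<le> card ?Q" "card C + 5 \<le> 2 * card ?R"
      using \<open>\<not> 2*n-4 \<le> k\<close> C(2) assms by auto
    moreover have "?Q \<noteq> {}" "?R \<noteq> {}" using assms by auto
    ultimately show False using lower[of ?R ?Q C] C(1) by simp
  qed
  have mem: "2*n-4 \<in> card ` {C. id_code (?R\<times>?Q) EE C}"
    using C0_id[OF assms] C0_card[OF assms] by (metis (mono_tags, lifting) image_eqI mem_Collect_eq)
  show ?thesis unfolding V gamma_ID_def by (rule Min_eqI[OF fin lb mem])
qed

end
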